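(* Let $K\ge2$ and $q\ge 2K^3$. Then there exists a mixture model $\nu=\sum_{k=1}^K p^{(k)}\nu^{(k)}$ on $\mathbb{R}^d$ (satisfying the standing assumptions below), whose components have probability mass functions symmetric about their means, with equal mixing weights (so one may take $\alpha=1$), with $ENR(\nu)=q$, and for which $\beta=\sqrt{q}/2$ satisfies $$\beta\cdot \mathbb{E}_{x\sim\nu}\big[|x_i-\mu_i(x)|\big]\ \ge\ \sqrt{\mathbb{E}_{x\sim\nu}\big[|x_i-\mu_i(x)|^2\big]}\quad\text{for all } i\in[d],$$ such that every decision tree $T$ with $K$ leaves, each of which contains exactly one of the means $\mu^{(k)}$, satisfies $$Price(\nu,T)=\Omega\!\left(\frac{\alpha\beta\log K}{\sqrt{q}}\right).$$
   Context: Standing assumptions on a mixture model: $\nu=\sum_{k=1}^K p^{(k)}\nu^{(k)}$ with $\sum_k p^{(k)}=1$, each $\nu^{(k)}$ a discrete or absolutely continuous probability distribution on $\mathbb{R}^d$ with mean $\mu^{(k)}$ and density/mass function symmetric about $\mu^{(k)}$; all components share finite coordinate-wise variances $\sigma_1^2,\dots,\sigma_d^2>0$; $p^{(k)}\le\alpha/K$ for some $\alpha\ge1$. For $x\sim\nu$ drawn from component $k$, $\mu(x)=\mu^{(k)}$. $ENR(\nu)=\min_{k\ne l}\max_{j\in[d]}|\mu^{(k)}_j-\mu^{(l)}_j|^2/\sigma_j^2$. A decision tree is a binary tree whose internal nodes split by axis-aligned threshold cuts $x_i\le\theta$ vs. $x_i>\theta$, whose leaves partition $\mathbb{R}^d$.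 For $x$, $\tilde\mu(x)$ is a median of the leaf containing $x$ (a minimizer $c$ of $\mathbb{E}[\|x'-c\|_1\mid x'\text{ in that leaf}]$, $x'\sim\nu$), and $Price(\nu,T)=\mathbb{E}_{x\sim\nu}[\|x-\tilde\mu(x)\|_1]/\mathbb{E}_{x\sim\nu}[\|x-\mu(x)\|_1]$. The $\Omega$ hides a universal positive constant independent of $K$ and $q$. *)

theory Defs
  imports "HOL-Probability.Probability"
begin

text \<open>Points of R^d are represented as functions nat => real; only coordinates j < d
  are meaningful (the component distributions are supported on vectors vanishing
  outside {0..<d}).\<close>

type_synonym point = "nat \<Rightarrow> real"

datatype dtree = Leaf | Node nat real dtree dtree

fun leaf_of :: "dtree \<Rightarrow> point \<Rightarrow> bool list" where
  "leaf_of Leaf x = []"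
| "leaf_of (Node i \<theta> l r) x =
     (if x i \<le> \<theta> then False # leaf_of l x else True # leaf_of r x)"

fun leaves :: "dtree \<Rightarrow> bool list set" where
  "leaves Leaf = {[]}"
| "leaves (Node i \<theta> l r) = (Cons False ` leaves l) \<union> (Cons True ` leaves r)"

fun num_leaves :: "dtree \<Rightarrow> nat" where
  "num_leaves Leaf = 1"
| "num_leaves (Node i \<theta> l r) = num_leaves l + num_leaves r"

definition l1 :: "nat \<Rightarrow> point \<Rightarrow> point \<Rightarrow> real" where
  "l1 d x y = (\<Sum>j<d. \<bar>x j - y j\<bar>)"

text \<open>Equal-weight mixture of the components \<nu> 0, ..., \<nu> (K-1), as a joint
  distribution of (component label k, point x).\<close>
definition mixture :: "nat \<Rightarrow> (nat \<Rightarrow> point pmf) \<Rightarrow> (nat \<times> point) pmf" where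
  "mixture K \<nu> = bind_pmf (pmf_of_set {..<K}) (\<lambda>k. map_pmf (\<lambda>x. (k, x)) (\<nu> k))"

definition comp_mean :: "(nat \<Rightarrow> point pmf) \<Rightarrow> nat \<Rightarrow> point" where
  "comp_mean \<nu> k = (\<lambda>j. measure_pmf.expectation (\<nu> k) (\<lambda>x. x j))"

text \<open>Standing assumptions, for equal mixing weights p^(k) = 1/K (so alpha = 1):
  each component is a probability mass function on R^d, with finite coordinate
  variances, symmetric about its mean, and all components share the coordinate
  variances sigma_j^2 > 0.\<close>
definition mixture_model :: "nat \<Rightarrow> nat \<Rightarrow> (nat \<Rightarrow> point pmf) \<Rightarrow> (nat \<Rightarrow> real) \<Rightarrow> bool" where
  "mixture_model d K \<nu> \<sigma> \<longleftrightarrow>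
     d \<ge> 1 \<and> K \<ge> 1 \<and>
     (\<forall>k<K. set_pmf (\<nu> k) \<subseteq> {x. \<forall>j\<ge>d. x j = 0}) \<and>
     (\<forall>k<K. \<forall>j<d. integrable (measure_pmf (\<nu> k)) (\<lambda>x. (x j)\<^sup>2)) \<and>
     (\<forall>k<K. \<forall>x. pmf (\<nu> k) x = pmf (\<nu> k) (\<lambda>j. 2 * comp_mean \<nu> k j - x j)) \<and>
     (\<forall>j<d. \<sigma> j > 0) \<and>
     (\<forall>k<K. \<forall>j<d.
        measure_pmf.expectation (\<nu> k) (\<lambda>x. (x j - comp_mean \<nu> k j)\<^sup>2) = (\<sigma> j)\<^sup>2)"

definition ENR :: "nat \<Rightarrow> nat \<Rightarrow> (nat \<Rightarrow> point pmf) \<Rightarrow> (nat \<Rightarrow> real) \<Rightarrow> real" where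
  "ENR d K \<nu> \<sigma> =
     Min ((\<lambda>(k, l). Max ((\<lambda>j. (comp_mean \<nu> k j - comp_mean \<nu> l j)\<^sup>2 / (\<sigma> j)\<^sup>2) ` {..<d}))
          ` {(k, l). k < K \<and> l < K \<and> k \<noteq> l})"

definition mix_exp :: "nat \<Rightarrow> (nat \<Rightarrow> point pmf) \<Rightarrow> (point \<Rightarrow> point \<Rightarrow> real) \<Rightarrow> real" where
  "mix_exp K \<nu> f = measure_pmf.expectation (mixture K \<nu>) (\<lambda>(k, x). f x (comp_mean \<nu> k))"

text \<open>med assigns to every leaf a median of that leaf: a minimiser c of
  E[ ||x - c||_1 ; x in leaf ] (equivalently, of the conditional expectation given
  the leaf, whenever the leaf has positive mass).\<close>
definition leaf_medians :: "nat \<Rightarrow> nat \<Rightarrow> (nat \<Rightarrow> point pmf) \<Rightarrow> dtree \<Rightarrow> (bool list \<Rightarrow> point) \<Rightarrow> bool" where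
  "leaf_medians d K \<nu> T med \<longleftrightarrow>
     (\<forall>p\<in>leaves T. \<forall>c.
        mix_exp K \<nu> (\<lambda>x _. if leaf_of T x = p then l1 d x (med p) else 0)
        \<le> mix_exp K \<nu> (\<lambda>x _. if leaf_of T x = p then l1 d x c else 0))"

definition price :: "nat \<Rightarrow> nat \<Rightarrow> (nat \<Rightarrow> point pmf) \<Rightarrow> dtree \<Rightarrow> (bool list \<Rightarrow> point) \<Rightarrow> real" where
  "price d K \<nu> T med =
     mix_exp K \<nu> (\<lambda>x _. l1 d x (med (leaf_of T x))) / mix_exp K \<nu> (\<lambda>x m. l1 d x m)"

end

theory Submission
  imports Defs
begin


datatype lab = LZ | LP | LM | EP nat | EM nat

definition ju :: "real \<Rightarrow> real" where "ju q = 361 / (90 * q)"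
definition jv :: "real \<Rightarrow> real" where "jv q = 1 / (10 * q)"
definition ja :: real where "ja = 9/19"

fun wt :: "real \<Rightarrow> nat \<Rightarrow> lab \<Rightarrow> real" where
  "wt q d LZ = 1 - ju q - real d * jv q"
| "wt q d LP = ju q / 2"
| "wt q d LM = ju q / 2"
| "wt q d (EP j) = (if j < d then jv q / 2 else 0)"
| "wt q d (EM j) = (if j < d then jv q / 2 else 0)"

fun phi :: "nat \<Rightarrow> lab \<Rightarrow> point" where
  "phi d LZ = (\<lambda>i. 0)"
| "phi d LP = (\<lambda>i. if i < d then ja else 0)"
| "phi d LM = (\<lambda>i. if i < d then - ja else 0)"
| "phi d (EP j) = (\<lambda>i. if i = j \<and> i < d then 1 else 0)"
| "phi d (EM j) = (\<lambda>i. if i = j \<and> i < d then -1 else 0)"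

definition Supp :: "nat \<Rightarrow> lab set" where
  "Supp d = {LZ, LP, LM} \<union> EP ` {..<d} \<union> EM ` {..<d}"

lemma finite_Supp[simp]: "finite (Supp d)" by (simp add: Supp_def)

lemma wt_out: "l \<notin> Supp d \<Longrightarrow> wt q d l = 0"
  by (cases l) (auto simp: Supp_def)

lemma sum_Supp: "(\<Sum>l\<in>Supp d. f l) = f LZ + f LP + f LM + (\<Sum>j<d. f (EP j)) + (\<Sum>j<d. f (EM j))"
proof -
  have d1: "{LZ, LP, LM} \<inter> (EP ` {..<d} \<union> EM ` {..<d}) = {}" by auto
  have d2: "EP ` {..<d} \<inter> EM ` {..<d} = {}" by auto
  have "(\<Sum>l\<in>Supp d. f l) = (\<Sum>l\<in>{LZ, LP, LM}. f l) + (\<Sum>l\<in>EP ` {..<d} \<union> EM ` {..<d}. f l)"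
    unfolding Supp_def Un_assoc by (rule sum.union_disjoint) (use d1 in auto)
  also have "(\<Sum>l\<in>EP ` {..<d} \<union> EM ` {..<d}. f l) = (\<Sum>l\<in>EP ` {..<d}. f l) + (\<Sum>l\<in>EM ` {..<d}. f l)"
    by (rule sum.union_disjoint) (use d2 in auto)
  also have "(\<Sum>l\<in>EP ` {..<d}. f l) = (\<Sum>j<d. f (EP j))" by (subst sum.reindex) (auto simp: inj_on_def)
  also have "(\<Sum>l\<in>EM ` {..<d}. f l) = (\<Sum>j<d. f (EM j))" by (subst sum.reindex) (auto simp: inj_on_def)
  finally show ?thesis by (simp add: ac_simps)
qed

definition good :: "real \<Rightarrow> nat \<Rightarrow> bool" where
  "good q d \<longleftrightarrow> q > 0 \<and> ju q + real d * jv q \<le> 1"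

lemma wt_nonneg: "good q d \<Longrightarrow> wt q d l \<ge> 0"
  by (cases l) (auto simp: good_def ju_def jv_def)

lemma wt_sum: "(\<Sum>l\<in>Supp d. wt q d l) = 1"
  by (simp add: sum_Supp)

definition Lab :: "real \<Rightarrow> nat \<Rightarrow> lab pmf" where
  "Lab q d = embed_pmf (wt q d)"

lemma pmf_Lab: assumes "good q d" shows "pmf (Lab q d) l = wt q d l"
  unfolding Lab_def
proof (rule pmf_embed_pmf)
  show "\<And>x. 0 \<le> wt q d x" using wt_nonneg[OF assms] .
  have "(\<integral>\<^sup>+x. ennreal (wt q d x) \<partial>count_space UNIV) = (\<Sum>x\<in>Supp d. ennreal (wt q d x))"
    by (rule nn_integral_count_space') (auto simp: wt_out)
  also have "\<dots> = ennreal (\<Sum>x\<in>Supp d. wt q d x)"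
    by (rule sum_ennreal) (use wt_nonneg[OF assms] in auto)
  finally show "(\<integral>\<^sup>+x. ennreal (wt q d x) \<partial>count_space UNIV) = 1" by (simp add: wt_sum)
qed

lemma set_Lab: assumes "good q d" shows "set_pmf (Lab q d) \<subseteq> Supp d"
  using assms wt_out by (fastforce simp: set_pmf_eq pmf_Lab)

lemma exp_Lab: assumes "good q d"
  shows "measure_pmf.expectation (Lab q d) (f::lab \<Rightarrow> real) = (\<Sum>l\<in>Supp d. wt q d l * f l)"
  by (subst integral_measure_pmf[of "Supp d"]) (use set_Lab[OF assms] in \<open>auto simp: pmf_Lab[OF assms] mult.commute\<close>)


lemma parity_symdiff:
  assumes "finite A"
  shows "(odd (card (A \<inter> X)) \<noteq> odd (card (A \<inter> Y))) \<longleftrightarrow> odd (card (A \<inter> ((X - Y) \<union> (Y - X))))"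
proof -
  have f: "finite (A \<inter> B)" for B using assms by simp
  have 1: "card (A \<inter> X) = card (A \<inter> X \<inter> Y) + card (A \<inter> (X - Y))"
    by (subst card_Un_disjoint[symmetric]) (auto simp: f intro!: arg_cong[where f=card])
  have 2: "card (A \<inter> Y) = card (A \<inter> X \<inter> Y) + card (A \<inter> (Y - X))"
    by (subst card_Un_disjoint[symmetric]) (auto simp: f intro!: arg_cong[where f=card])
  have 3: "card (A \<inter> ((X - Y) \<union> (Y - X))) = card (A \<inter> (X - Y)) + card (A \<inter> (Y - X))"
    by (subst card_Un_disjoint[symmetric]) (auto simp: f intro!: arg_cong[where f=card])
  show ?thesis unfolding 1 2 3 by presburger
qed

lemma card_odd_half:
  assumes M: "finite M" and Z: "Z \<subseteq> M" "Z \<noteq> {}"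
  shows "2 * card {A \<in> Pow M. odd (card (A \<inter> Z))} = 2 ^ card M"
proof -
  obtain e where e: "e \<in> Z" using Z by auto
  define tau where "tau A = (if e \<in> A then A - {e} else insert e A)" for A
  let ?O = "{A \<in> Pow M. odd (card (A \<inter> Z))}"
  let ?E = "{A \<in> Pow M. even (card (A \<inter> Z))}"
  have fin: "finite (A \<inter> Z)" if "A \<in> Pow M" for A using that M finite_subset by blast
  have par: "odd (card (tau A \<inter> Z)) \<longleftrightarrow> even (card (A \<inter> Z))" if "A \<in> Pow M" for A
  proof (cases "e \<in> A")
    case True
    then have "tau A \<inter> Z = (A \<inter> Z) - {e}" by (auto simp: tau_def)
    moreover have "card ((A \<inter> Z) - {e}) = card (A \<inter> Z) - 1" using True e fin[OF that] by simp
    moreover have "card (A \<inter> Z) \<ge> 1" using True e fin[OF that] by (metis IntI card_0_eq empty_iff less_one not_le)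
    ultimately show ?thesis by (metis Suc_diff_1 even_Suc less_le_trans zero_less_one)
  next
    case False
    then have "tau A \<inter> Z = insert e (A \<inter> Z)" using e by (auto simp: tau_def)
    moreover have "card (insert e (A \<inter> Z)) = Suc (card (A \<inter> Z))" using False fin[OF that] by simp
    ultimately show ?thesis by simp
  qed
  have tt: "tau (tau A) = A" for A by (auto simp: tau_def)
  have tP: "tau A \<in> Pow M" if "A \<in> Pow M" for A using that e Z by (auto simp: tau_def)
  have "bij_betw tau ?E ?O"
  proof (rule bij_betwI[where g=tau])
    show "tau \<in> ?E \<rightarrow> ?O" using par tP by auto
    show "tau \<in> ?O \<rightarrow> ?E" using par tP by auto
  qed (auto simp: tt)
  then have cE: "card ?E = card ?O" by (simp add: bij_betw_same_card)
  have "card ?O + card ?E = card (Pow M)"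
    by (subst card_Un_disjoint[symmetric]) (use M in \<open>auto intro!: arg_cong[where f=card]\<close>)
  then show ?thesis using M cE by (simp add: card_Pow)
qed

definition mu :: "nat \<Rightarrow> (nat \<Rightarrow> nat set) \<Rightarrow> (nat \<Rightarrow> nat set) \<Rightarrow> nat \<Rightarrow> point" where
  "mu d F G k = (\<lambda>j. if j < d \<and> odd (card (F j \<inter> G k)) then 1 else 0)"

lemma mu_dist:
  assumes F: "bij_betw F {..<d} (Pow {..<m})" and G: "G k \<subseteq> {..<m}" "G l \<subseteq> {..<m}" "G k \<noteq> G l"
  shows "2 * card {j\<in>{..<d}. mu d F G k j \<noteq> mu d F G l j} = 2 ^ m"
proof -
  let ?Z = "(G k - G l) \<union> (G l - G k)"
  have fin: "finite (F j)" if "j < d" for j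
  proof -
    have "F j \<in> Pow {..<m}" using F that by (auto simp: bij_betw_def)
    then show ?thesis by (meson PowD finite_lessThan finite_subset)
  qed
  have "{j\<in>{..<d}. mu d F G k j \<noteq> mu d F G l j} = {j\<in>{..<d}. odd (card (F j \<inter> ?Z))}"
    using parity_symdiff fin by (auto simp: mu_def)
  also have "card \<dots> = card {A \<in> Pow {..<m}. odd (card (A \<inter> ?Z))}"
  proof (rule bij_betw_same_card)
    show "bij_betw F {j \<in> {..<d}. odd (card (F j \<inter> ?Z))} {A \<in> Pow {..<m}. odd (card (A \<inter> ?Z))}"
      using F unfolding bij_betw_def inj_on_def
      by (auto simp: image_iff) (metis (no_types, lifting) PowI imageE lessThan_iff)
  qed
  finally show ?thesis using card_odd_half[of "{..<m}" ?Z] G by auto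
qed

lemma mu_bin: "mu d F G k j = 0 \<or> mu d F G k j = 1" by (simp add: mu_def)
lemma mu_out: "j \<ge> d \<Longrightarrow> mu d F G k j = 0" by (simp add: mu_def)


lemma leaf_of_in: "leaf_of T x \<in> leaves T"
  by (induction T) auto

lemma leaves_ne: "leaves T \<noteq> {}"
  by (induction T) auto

lemma leaves_fin: "finite (leaves T)"
  by (induction T) auto

lemma ln_ineq:
  fixes a b :: real assumes "a \<ge> 1" "b \<ge> 1"
  shows "(a + b) * ln (a + b) \<le> a * ln a + b * ln b + a + b"
proof -
  have l2: "ln 2 \<le> (1::real)" using ln_2_less_1 by simp
  have A: "ln ((a+b)/(2*a)) \<le> (a+b)/(2*a) - 1" by (rule ln_le_minus_one) (use assms in auto)
  have B: "ln ((a+b)/(2*b)) \<le> (a+b)/(2*b) - 1" by (rule ln_le_minus_one) (use assms in auto)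
  have A': "a * ln (a+b) - a * ln 2 - a * ln a \<le> (b - a)/2"
  proof -
    have i1: "a * ln ((a+b)/(2*a)) \<le> a * ((a+b)/(2*a) - 1)" using A assms by (intro mult_left_mono) auto
    have i2: "ln ((a+b)/(2*a)) = ln (a+b) - ln 2 - ln a" using assms by (simp add: ln_div ln_mult)
    have i3: "a * ((a+b)/(2*a) - 1) = (b - a)/2" using assms by (simp add: field_simps)
    have i4: "a * ln ((a+b)/(2*a)) = a * ln (a+b) - a * ln 2 - a * ln a" unfolding i2 by (simp add: algebra_simps)
    show ?thesis using i1 i3 i4 by linarith
  qed
  have B': "b * ln (a+b) - b * ln 2 - b * ln b \<le> (a - b)/2"
  proof -
    have i1: "b * ln ((a+b)/(2*b)) \<le> b * ((a+b)/(2*b) - 1)" using B assms by (intro mult_left_mono) auto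
    have i2: "ln ((a+b)/(2*b)) = ln (a+b) - ln 2 - ln b" using assms by (simp add: ln_div ln_mult)
    have i3: "b * ((a+b)/(2*b) - 1) = (a - b)/2" using assms by (simp add: field_simps)
    have i4: "b * ln ((a+b)/(2*b)) = b * ln (a+b) - b * ln 2 - b * ln b" unfolding i2 by (simp add: algebra_simps)
    show ?thesis using i1 i3 i4 by linarith
  qed
  have "(a+b) * ln 2 \<le> a + b" using l2 assms by (simp add: mult_left_le)
  then show ?thesis using A' B' by (simp add: algebra_simps)
qed

lemma depth_sum:
  "real (card (leaves T)) * ln (real (card (leaves T))) \<le> (\<Sum>p\<in>leaves T. real (length p))"
proof (induction T)
  case Leaf
  then show ?case by simp
next
  case (Node i \<theta> l r)
  let ?a = "card (leaves l)" and ?b = "card (leaves r)"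
  have a1: "?a \<ge> 1" using leaves_ne leaves_fin by (metis One_nat_def Suc_leI card_gt_0_iff)
  have b1: "?b \<ge> 1" using leaves_ne leaves_fin by (metis One_nat_def Suc_leI card_gt_0_iff)
  have disj: "Cons False ` leaves l \<inter> Cons True ` leaves r = {}" by auto
  have c: "card (leaves (Node i \<theta> l r)) = ?a + ?b"
    using disj leaves_fin by (simp add: card_Un_disjoint card_image)
  have s: "(\<Sum>p\<in>leaves (Node i \<theta> l r). real (length p))
     = (\<Sum>p\<in>leaves l. real (length p)) + ?a + ((\<Sum>p\<in>leaves r. real (length p)) + ?b)"
    using disj leaves_fin by (simp add: sum.union_disjoint sum.reindex sum.distrib)
  have "real (?a + ?b) * ln (real (?a + ?b)) \<le> real ?a * ln ?a + real ?b * ln ?b + ?a + ?b"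
    using ln_ineq[of "real ?a" "real ?b"] a1 b1 by simp
  then show ?case unfolding c s using Node.IH by linarith
qed

lemma flip_count:
  assumes bin: "\<forall>y\<in>S. \<forall>i. y i = 0 \<or> y i = 1"
    and uniq: "\<forall>p\<in>leaves T. \<exists>!y. y \<in> S \<and> leaf_of T y = p"
    and x: "x \<in> S"
  shows "\<exists>A. finite A \<and> card A = length (leaf_of T x) \<and>
     (\<forall>i\<in>A. leaf_of T (x(i := 1 - x i)) \<noteq> leaf_of T x \<and> (\<exists>y\<in>S. y i \<noteq> x i))"
  using bin uniq x
proof (induction T arbitrary: S)
  case Leaf
  then show ?case by (intro exI[of _ "{}"]) auto
next
  case (Node i \<theta> l r)
  have ex: "\<exists>y. y \<in> S \<and> leaf_of (Node i \<theta> l r) y = p" if "p \<in> leaves (Node i \<theta> l r)" for p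
    using Node.prems(2) that by blast
  obtain pl where pl: "pl \<in> leaves l" using leaves_ne by blast
  obtain pr where pr: "pr \<in> leaves r" using leaves_ne by blast
  obtain zl where zl: "zl \<in> S" "zl i \<le> \<theta>" using ex[of "False # pl"] pl by (auto split: if_splits)
  obtain zr where zr: "zr \<in> S" "zr i > \<theta>" using ex[of "True # pr"] pr by (auto split: if_splits)
  have b: "y i = 0 \<or> y i = 1" if "y \<in> S" for y using Node.prems(1) that by blast
  have th: "0 \<le> \<theta> \<and> \<theta> < 1" using b[OF zl(1)] b[OF zr(1)] zl zr by auto
  show ?case
  proof (cases "x i \<le> \<theta>")
    case True
    let ?S = "{y\<in>S. y i \<le> \<theta>}"
    have u: "\<forall>p\<in>leaves l. \<exists>!y. y \<in> ?S \<and> leaf_of l y = p"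
    proof
      fix p assume "p \<in> leaves l"
      then have "False # p \<in> leaves (Node i \<theta> l r)" by simp
      then have "\<exists>!y. y \<in> S \<and> leaf_of (Node i \<theta> l r) y = False # p" using Node.prems(2) by blast
      moreover have "leaf_of (Node i \<theta> l r) y = False # p \<longleftrightarrow> y i \<le> \<theta> \<and> leaf_of l y = p" for y by simp
      ultimately show "\<exists>!y. y \<in> ?S \<and> leaf_of l y = p" by simp
    qed
    have "\<exists>A. finite A \<and> card A = length (leaf_of l x) \<and>
      (\<forall>j\<in>A. leaf_of l (x(j := 1 - x j)) \<noteq> leaf_of l x \<and> (\<exists>y\<in>?S. y j \<noteq> x j))"
      by (rule Node.IH(1)) (use u Node.prems(1,3) True in auto)
    then obtain A where A: "finite A" "card A = length (leaf_of l x)"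
      "\<forall>j\<in>A. leaf_of l (x(j := 1 - x j)) \<noteq> leaf_of l x \<and> (\<exists>y\<in>?S. y j \<noteq> x j)"
      by blast
    have x0: "x i = 0" using b[OF Node.prems(3)] True th by auto
    have iA: "i \<notin> A"
    proof
      assume "i \<in> A"
      then obtain y where "y \<in> S" "y i \<le> \<theta>" "y i \<noteq> x i" using A(3) by auto
      then show False using b x0 th by force
    qed
    show ?thesis
    proof (intro exI[of _ "insert i A"] conjI ballI)
      show "finite (insert i A)" using A by simp
      show "card (insert i A) = length (leaf_of (Node i \<theta> l r) x)" using A iA True by simp
    next
      fix j assume j: "j \<in> insert i A"
      show "leaf_of (Node i \<theta> l r) (x(j := 1 - x j)) \<noteq> leaf_of (Node i \<theta> l r) x"
      proof (cases "j = i")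
        case True
        then show ?thesis using x0 th \<open>x i \<le> \<theta>\<close> by simp
      next
        case False
        then have "j \<in> A" using j by simp
        then show ?thesis using A(3) False \<open>x i \<le> \<theta>\<close> by auto
      qed
      show "\<exists>y\<in>S. y j \<noteq> x j"
      proof (cases "j = i")
        case True then show ?thesis using zr x0 th by (intro bexI[of _ zr]) auto
      next
        case False then show ?thesis using A(3) j by auto
      qed
    qed
  next
    case False
    let ?S = "{y\<in>S. \<not> y i \<le> \<theta>}"
    have u: "\<forall>p\<in>leaves r. \<exists>!y. y \<in> ?S \<and> leaf_of r y = p"
    proof
      fix p assume "p \<in> leaves r"
      then have "True # p \<in> leaves (Node i \<theta> l r)" by simp
      then have "\<exists>!y. y \<in> S \<and> leaf_of (Node i \<theta> l r) y = True # p" using Node.prems(2) by blast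
      moreover have "leaf_of (Node i \<theta> l r) y = True # p \<longleftrightarrow> \<not> y i \<le> \<theta> \<and> leaf_of r y = p" for y by simp
      ultimately show "\<exists>!y. y \<in> ?S \<and> leaf_of r y = p" by simp
    qed
    have "\<exists>A. finite A \<and> card A = length (leaf_of r x) \<and>
      (\<forall>j\<in>A. leaf_of r (x(j := 1 - x j)) \<noteq> leaf_of r x \<and> (\<exists>y\<in>?S. y j \<noteq> x j))"
      by (rule Node.IH(2)) (use u Node.prems(1,3) False in auto)
    then obtain A where A: "finite A" "card A = length (leaf_of r x)"
      "\<forall>j\<in>A. leaf_of r (x(j := 1 - x j)) \<noteq> leaf_of r x \<and> (\<exists>y\<in>?S. y j \<noteq> x j)"
      by blast
    have x1: "x i = 1" using b[OF Node.prems(3)] False th by auto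
    have iA: "i \<notin> A"
    proof
      assume "i \<in> A"
      then obtain y where "y \<in> S" "\<not> y i \<le> \<theta>" "y i \<noteq> x i" using A(3) by auto
      then show False using b x1 th by force
    qed
    show ?thesis
    proof (intro exI[of _ "insert i A"] conjI ballI)
      show "finite (insert i A)" using A by simp
      show "card (insert i A) = length (leaf_of (Node i \<theta> l r) x)" using A iA False by simp
    next
      fix j assume j: "j \<in> insert i A"
      show "leaf_of (Node i \<theta> l r) (x(j := 1 - x j)) \<noteq> leaf_of (Node i \<theta> l r) x"
      proof (cases "j = i")
        case True
        then show ?thesis using x1 th \<open>\<not> x i \<le> \<theta>\<close> by simp
      next
        case False
        then have "j \<in> A" using j by simp
        then show ?thesis using A(3) False \<open>\<not> x i \<le> \<theta>\<close> by auto
      qed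
      show "\<exists>y\<in>S. y j \<noteq> x j"
      proof (cases "j = i")
        case True then show ?thesis using zl x1 th by (intro bexI[of _ zl]) auto
      next
        case False then show ?thesis using A(3) j by auto
      qed
    qed
  qed
qed


definition xpt :: "nat \<Rightarrow> (nat \<Rightarrow> nat set) \<Rightarrow> (nat \<Rightarrow> nat set) \<Rightarrow> nat \<Rightarrow> lab \<Rightarrow> point" where
  "xpt d F G k l = (\<lambda>i. mu d F G k i + phi d l i)"

definition nu :: "real \<Rightarrow> nat \<Rightarrow> (nat \<Rightarrow> nat set) \<Rightarrow> (nat \<Rightarrow> nat set) \<Rightarrow> nat \<Rightarrow> point pmf" where
  "nu q d F G k = map_pmf (xpt d F G k) (Lab q d)"

lemma sum_Supp_sym:
  assumes "\<And>j. f (EM j) = - f (EP j)" "f LM = - f LP" "f LZ = (0::real)"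
  shows "(\<Sum>l\<in>Supp d. f l) = 0"
  by (simp add: sum_Supp assms sum_negf)

lemma comp_mean_nu: assumes "good q d" shows "comp_mean (nu q d F G) k = mu d F G k"
proof
  fix j
  have "comp_mean (nu q d F G) k j = (\<Sum>l\<in>Supp d. wt q d l * (mu d F G k j + phi d l j))"
    unfolding comp_mean_def nu_def by (simp add: exp_Lab[OF assms] xpt_def)
  also have "\<dots> = mu d F G k j * (\<Sum>l\<in>Supp d. wt q d l) + (\<Sum>l\<in>Supp d. wt q d l * phi d l j)"
    by (simp add: algebra_simps sum.distrib sum_distrib_left sum_distrib_right)
  also have "(\<Sum>l\<in>Supp d. wt q d l * phi d l j) = 0"
    by (rule sum_Supp_sym) auto
  finally show "comp_mean (nu q d F G) k j = mu d F G k j" by (simp add: wt_sum)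
qed

lemma mixture_eq: "mixture K (nu q d F G) =
   map_pmf (\<lambda>(k, l). (k, xpt d F G k l)) (pair_pmf (pmf_of_set {..<K}) (Lab q d))"
  unfolding mixture_def nu_def pair_pmf_def
  by (simp add: map_bind_pmf map_pmf_comp bind_return_pmf map_pmf_def[symmetric] bind_map_pmf)

lemma mix_exp_sum:
  assumes g: "good q d" and K: "K > 0"
  shows "mix_exp K (nu q d F G) f =
    (\<Sum>k<K. \<Sum>l\<in>Supp d. wt q d l * f (xpt d F G k l) (mu d F G k)) / real K"
proof -
  have "mix_exp K (nu q d F G) f = measure_pmf.expectation (pair_pmf (pmf_of_set {..<K}) (Lab q d))
     (\<lambda>(k,l). f (xpt d F G k l) (mu d F G k))"
    unfolding mix_exp_def mixture_eq by (simp add: comp_mean_nu[OF g] case_prod_unfold)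
  also have "\<dots> = (\<Sum>a\<in>{..<K} \<times> Supp d. pmf (pair_pmf (pmf_of_set {..<K}) (Lab q d)) a *\<^sub>R
       (\<lambda>(k,l). f (xpt d F G k l) (mu d F G k)) a)"
  proof (rule integral_measure_pmf)
    show "finite ({..<K} \<times> Supp d)" by simp
    fix a assume "a \<in> set_pmf (pair_pmf (pmf_of_set {..<K}) (Lab q d))"
    then show "a \<in> {..<K} \<times> Supp d" using set_Lab[OF g] K by (auto simp: set_pair_pmf set_pmf_of_set lessThan_empty_iff)
  qed
  also have "\<dots> = (\<Sum>k<K. \<Sum>l\<in>Supp d. (1 / real K) * (wt q d l * f (xpt d F G k l) (mu d F G k)))"
    unfolding sum.cartesian_product
    by (intro sum.cong refl) (auto simp: pmf_pair pmf_Lab[OF g] K pmf_of_set lessThan_empty_iff)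
  also have "\<dots> = (\<Sum>k<K. \<Sum>l\<in>Supp d. wt q d l * f (xpt d F G k l) (mu d F G k)) / real K"
    by (simp add: sum_distrib_left[symmetric] sum_divide_distrib)
  finally show ?thesis .
qed


lemma phi_out: "i \<ge> d \<Longrightarrow> phi d l i = 0" by (cases l) auto

definition n1 :: "nat \<Rightarrow> lab \<Rightarrow> real" where "n1 d l = (\<Sum>j<d. \<bar>phi d l j\<bar>)"

lemma l1_tri: "l1 d x z \<le> l1 d x y + l1 d y z"
  unfolding l1_def by (simp add: sum.distrib[symmetric] sum_mono abs_triangle_ineq[of "x _ - y _" "y _ - z _", simplified])

lemma l1_sym: "l1 d x y = l1 d y x"
  unfolding l1_def by (simp add: abs_minus_commute)

lemma l1_nonneg: "l1 d x y \<ge> 0" unfolding l1_def by (simp add: sum_nonneg)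

locale constr =
  fixes q :: real and d m K :: nat and F G :: "nat \<Rightarrow> nat set"
  assumes q: "q > 0" and m3: "m \<ge> 3" and dm: "d = 2 ^ m" and K2: "K \<ge> 2"
    and F: "bij_betw F {..<d} (Pow {..<m})"
    and Gi: "inj_on G {..<K}" and Gs: "G ` {..<K} \<subseteq> Pow {..<m}"
    and dom: "real (K + 1) * (ju q + real d * jv q) \<le> 1"
begin

abbreviation "M \<equiv> mu d F G"
abbreviation "\<nu> \<equiv> nu q d F G"

lemma gd: "good q d"
proof -
  have "ju q + real d * jv q \<ge> 0" using q by (simp add: ju_def jv_def)
  then have "ju q + real d * jv q \<le> real (K+1) * (ju q + real d * jv q)"
    by (simp add: mult_le_cancel_right1 )
  then show ?thesis using dom q by (simp add: good_def)
qed

lemma d8: "d \<ge> 8"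
proof -
  have "(2::nat) ^ 3 \<le> 2 ^ m" using m3 by (intro power_increasing) auto
  then show ?thesis using dm by simp
qed

lemma cm: "comp_mean \<nu> k = M k" by (rule comp_mean_nu[OF gd])

lemma mexp: "mix_exp K \<nu> f = (\<Sum>k<K. \<Sum>l\<in>Supp d. wt q d l * f (xpt d F G k l) (M k)) / real K"
  by (rule mix_exp_sum[OF gd]) (use K2 in auto)

lemma dist_half: assumes "k < K" "k' < K" "k \<noteq> k'"
  shows "2 * card {j\<in>{..<d}. M k j \<noteq> M k' j} = d"
proof -
  have "G k \<subseteq> {..<m}" "G k' \<subseteq> {..<m}" using Gs assms by auto
  moreover have "G k \<noteq> G k'" using Gi assms by (auto simp: inj_on_def)
  ultimately show ?thesis using mu_dist[OF F, of G k k'] dm by simp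
qed

lemma l1_means: assumes "k < K" "k' < K" "k \<noteq> k'"
  shows "l1 d (M k) (M k') = real d / 2"
proof -
  have "l1 d (M k) (M k') = (\<Sum>j<d. if M k j \<noteq> M k' j then 1 else 0)"
    unfolding l1_def by (intro sum.cong refl) (auto simp: mu_def)
  also have "\<dots> = real (card {j\<in>{..<d}. M k j \<noteq> M k' j})"
    by (simp add: sum.If_cases Int_def conj_commute)
  finally show ?thesis using dist_half[OF assms] by linarith
qed


lemma sum_phi:
  assumes j: "j < d" and g0: "g 0 = 0" and ga: "g (- ja) = g ja" and g1: "g (-1) = g 1"
  shows "(\<Sum>l\<in>Supp d. wt q d l * g (phi d l j)) = ju q * g ja + jv q * (g 1 :: real)"
proof -
  have e1: "(\<Sum>j'<d. wt q d (EP j') * g (phi d (EP j') j)) = jv q / 2 * g 1"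
  proof -
    have "(\<Sum>j'<d. wt q d (EP j') * g (phi d (EP j') j)) = (\<Sum>j'<d. if j' = j then jv q / 2 * g 1 else 0)"
      by (intro sum.cong refl) (auto simp: g0 j)
    then show ?thesis using j by simp
  qed
  have e2: "(\<Sum>j'<d. wt q d (EM j') * g (phi d (EM j') j)) = jv q / 2 * g 1"
  proof -
    have "(\<Sum>j'<d. wt q d (EM j') * g (phi d (EM j') j)) = (\<Sum>j'<d. if j' = j then jv q / 2 * g 1 else 0)"
      by (intro sum.cong refl) (auto simp: g0 j g1)
    then show ?thesis using j by simp
  qed
  show ?thesis unfolding sum_Supp e1 e2 using j by (simp add: g0 ga field_simps)
qed

lemma var_val: "ju q * ja\<^sup>2 + jv q = 1 / q"
  using q by (simp add: ju_def jv_def ja_def power2_eq_square field_simps)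

lemma abs_val: "ju q * ja + jv q = 2 / q"
  using q by (simp add: ju_def jv_def ja_def field_simps)

lemma D_val: "mix_exp K \<nu> (\<lambda>x m. l1 d x m) = 2 * real d / q"
proof -
  have pt: "l1 d (xpt d F G k l) (M k) = n1 d l" for k l
    unfolding l1_def n1_def xpt_def by simp
  have inner: "(\<Sum>l\<in>Supp d. wt q d l * n1 d l) = 2 * real d / q"
  proof -
    have "(\<Sum>l\<in>Supp d. wt q d l * n1 d l) = (\<Sum>l\<in>Supp d. \<Sum>j<d. wt q d l * \<bar>phi d l j\<bar>)"
      unfolding n1_def by (simp add: sum_distrib_left)
    also have "\<dots> = (\<Sum>j<d. \<Sum>l\<in>Supp d. wt q d l * \<bar>phi d l j\<bar>)"
      by (rule sum.swap)
    also have "\<dots> = (\<Sum>j<d. 2 / q)"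
    proof (intro sum.cong refl)
      fix j assume "j \<in> {..<d}"
      then show "(\<Sum>l\<in>Supp d. wt q d l * \<bar>phi d l j\<bar>) = 2 / q"
        using sum_phi[of j "\<lambda>t. \<bar>t\<bar>"] abs_val by (simp add: ja_def)
    qed
    finally show ?thesis by simp
  qed
  show ?thesis unfolding mexp pt inner using K2 by simp
qed

lemma abs_exp: assumes "i < d" shows "mix_exp K \<nu> (\<lambda>x m. \<bar>x i - m i\<bar>) = 2 / q"
proof -
  have s: "(\<Sum>l\<in>Supp d. wt q d l * \<bar>phi d l i\<bar>) = 2/q"
    using sum_phi[of i "\<lambda>t. \<bar>t\<bar>"] abs_val assms by (simp add: ja_def)
  have "mix_exp K \<nu> (\<lambda>x m. \<bar>x i - m i\<bar>) = (\<Sum>k<K. \<Sum>l\<in>Supp d. wt q d l * \<bar>phi d l i\<bar>) / real K"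
    unfolding mexp xpt_def by simp
  also have "\<dots> = 2 / q" unfolding s using K2 by simp
  finally show ?thesis .
qed

lemma sq_exp: assumes "i < d" shows "mix_exp K \<nu> (\<lambda>x m. \<bar>x i - m i\<bar>\<^sup>2) = 1 / q"
proof -
  have s: "(\<Sum>l\<in>Supp d. wt q d l * \<bar>phi d l i\<bar>\<^sup>2) = 1/q"
    using sum_phi[of i "\<lambda>t. \<bar>t\<bar>\<^sup>2"] var_val assms by simp
  have "mix_exp K \<nu> (\<lambda>x m. \<bar>x i - m i\<bar>\<^sup>2) = (\<Sum>k<K. \<Sum>l\<in>Supp d. wt q d l * \<bar>phi d l i\<bar>\<^sup>2) / real K"
    unfolding mexp xpt_def by simp
  also have "\<dots> = 1 / q" unfolding s using K2 by simp
  finally show ?thesis .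
qed

fun negl :: "lab \<Rightarrow> lab" where
  "negl LZ = LZ" | "negl LP = LM" | "negl LM = LP" | "negl (EP j) = EM j" | "negl (EM j) = EP j"

lemma negl_negl[simp]: "negl (negl l) = l" by (cases l) auto
lemma inj_negl: "inj negl" by (metis injI negl_negl)
lemma wt_negl: "wt q d (negl l) = wt q d l" by (cases l) auto

lemma Lab_negl: "map_pmf negl (Lab q d) = Lab q d"
proof (rule pmf_eqI)
  fix l
  have "pmf (map_pmf negl (Lab q d)) l = pmf (map_pmf negl (Lab q d)) (negl (negl l))" by simp
  also have "\<dots> = pmf (Lab q d) (negl l)" by (rule pmf_map_inj'[OF inj_negl])
  also have "\<dots> = pmf (Lab q d) l" by (simp add: pmf_Lab[OF gd] wt_negl)
  finally show "pmf (map_pmf negl (Lab q d)) l = pmf (Lab q d) l" .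
qed

lemma nu_sym: "pmf (\<nu> k) x = pmf (\<nu> k) (\<lambda>j. 2 * M k j - x j)"
proof -
  define R where "R = (\<lambda>x::point. \<lambda>j. 2 * M k j - x j)"
  have injR: "inj R" unfolding R_def inj_def fun_eq_iff by auto
  have phin: "phi d (negl l) = (\<lambda>i. - phi d l i)" for l by (cases l) auto
  have "R \<circ> xpt d F G k = xpt d F G k \<circ> negl"
    by (rule ext) (simp add: R_def xpt_def phin)
  then have "map_pmf R (\<nu> k) = \<nu> k"
  proof -
    assume eq: "R \<circ> xpt d F G k = xpt d F G k \<circ> negl"
    have "map_pmf R (\<nu> k) = map_pmf (R \<circ> xpt d F G k) (Lab q d)" unfolding nu_def by (rule pmf.map_comp)
    also have "\<dots> = map_pmf (xpt d F G k \<circ> negl) (Lab q d)" by (simp only: eq)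
    also have "\<dots> = map_pmf (xpt d F G k) (map_pmf negl (Lab q d))" by (rule pmf.map_comp[symmetric])
    also have "\<dots> = \<nu> k" unfolding nu_def Lab_negl ..
    finally show ?thesis .
  qed
  then have "pmf (\<nu> k) (R x) = pmf (map_pmf R (\<nu> k)) (R x)" by simp
  also have "\<dots> = pmf (\<nu> k) x" by (rule pmf_map_inj'[OF injR])
  finally show ?thesis by (simp add: R_def)
qed

lemma model: "mixture_model d K \<nu> (\<lambda>_. sqrt (1 / q))"
proof -
  have s1: "set_pmf (\<nu> k) \<subseteq> {x. \<forall>j\<ge>d. x j = 0}" for k
    unfolding nu_def by (auto simp: xpt_def mu_out phi_out)
  have "finite (set_pmf (Lab q d))" using set_Lab[OF gd] finite_subset finite_Supp by blast
  then have fin: "finite (set_pmf (\<nu> k))" for k unfolding nu_def by simp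
  have s2: "integrable (measure_pmf (\<nu> k)) (\<lambda>x. (x j)\<^sup>2)" for k j
    using integrable_measure_pmf_finite[OF fin] by auto
  have s3: "pmf (\<nu> k) x = pmf (\<nu> k) (\<lambda>j. 2 * comp_mean \<nu> k j - x j)" for k x
    using nu_sym by (simp add: cm)
  have s5: "measure_pmf.expectation (\<nu> k) (\<lambda>x. (x j - comp_mean \<nu> k j)\<^sup>2) = (sqrt (1 / q))\<^sup>2"
    if "j < d" for k j
  proof -
    have "measure_pmf.expectation (\<nu> k) (\<lambda>x. (x j - comp_mean \<nu> k j)\<^sup>2)
        = (\<Sum>l\<in>Supp d. wt q d l * (phi d l j)\<^sup>2)"
      by (simp add: cm nu_def exp_Lab[OF gd] xpt_def)
    also have "\<dots> = 1 / q" using sum_phi[of j "\<lambda>t. t\<^sup>2"] var_val that by simp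
    finally show ?thesis using q by simp
  qed
  show ?thesis unfolding mixture_model_def using s1 s2 s3 s5 d8 K2 q by auto
qed

lemma ENR_val: "ENR d K \<nu> (\<lambda>_. sqrt (1 / q)) = q"
proof -
  have inner: "Max ((\<lambda>j. (M k j - M l j)\<^sup>2 / (sqrt (1 / q))\<^sup>2) ` {..<d}) = q"
    if "k < K" "l < K" "k \<noteq> l" for k l
  proof (rule Max_eqI)
    show "finite ((\<lambda>j. (M k j - M l j)\<^sup>2 / (sqrt (1 / q))\<^sup>2) ` {..<d})" by simp
    show "y \<le> q" if "y \<in> (\<lambda>j. (M k j - M l j)\<^sup>2 / (sqrt (1 / q))\<^sup>2) ` {..<d}" for y
      using that q by (auto simp: mu_def)
    have "{j\<in>{..<d}. M k j \<noteq> M l j} \<noteq> {}"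
    proof
      assume E: "{j\<in>{..<d}. M k j \<noteq> M l j} = {}"
      have "2 * card {j\<in>{..<d}. M k j \<noteq> M l j} = d" by (rule dist_half[OF that])
      then have "d = 0" unfolding E by simp
      then show False using d8 by simp
    qed
    then obtain j where j: "j < d" "M k j \<noteq> M l j" by auto
    then have "(M k j - M l j)\<^sup>2 / (sqrt (1 / q))\<^sup>2 = q" using q by (auto simp: mu_def split: if_splits)
    then show "q \<in> (\<lambda>j. (M k j - M l j)\<^sup>2 / (sqrt (1 / q))\<^sup>2) ` {..<d}" using j by force
  qed
  have "(0, 1) \<in> {(k, l). k < K \<and> l < K \<and> k \<noteq> l}" using K2 by simp
  then have ne: "{(k, l). k < K \<and> l < K \<and> k \<noteq> l} \<noteq> {}" by blast
  let ?g = "\<lambda>(k, l). Max ((\<lambda>j. (comp_mean \<nu> k j - comp_mean \<nu> l j)\<^sup>2 / (sqrt (1 / q))\<^sup>2) ` {..<d})"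
  let ?S = "{(k, l). k < K \<and> l < K \<and> k \<noteq> l}"
  obtain a b where ab: "(a, b) \<in> ?S" using ne by auto
  have gq: "?g x = q" if "x \<in> ?S" for x
  proof -
    obtain k l where x: "x = (k, l)" by (cases x)
    have "k < K" "l < K" "k \<noteq> l" using that x by auto
    from inner[OF this] show ?thesis unfolding x cm by simp
  qed
  have qin: "q \<in> ?g ` ?S"
  proof (rule image_eqI)
    show "(a, b) \<in> ?S" by (rule ab)
    show "q = ?g (a, b)" using gq[OF ab] by simp
  qed
  have sub: "?g ` ?S \<subseteq> {q}"
  proof
    fix y assume "y \<in> ?g ` ?S"
    then obtain x where "x \<in> ?S" "y = ?g x" by blast
    then show "y \<in> {q}" using gq by simp
  qed
  have "?g ` ?S = {q}" using qin sub by blast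
  then show ?thesis unfolding ENR_def by simp
qed

lemma beta_cond: "i < d \<Longrightarrow> sqrt q / 2 * mix_exp K \<nu> (\<lambda>x m. \<bar>x i - m i\<bar>)
                    \<ge> sqrt (mix_exp K \<nu> (\<lambda>x m. \<bar>x i - m i\<bar>\<^sup>2))"
proof -
  assume i: "i < d"
  have sq: "sqrt q * sqrt q = q" using q by simp
  have sp: "sqrt q > 0" using q by simp
  have "sqrt q / 2 * (2 / q) = 1 / sqrt q"
    using sp by (simp add: field_simps sq)
  moreover have "sqrt (1 / q) = 1 / sqrt q" by (simp add: real_sqrt_divide)
  ultimately show ?thesis unfolding abs_exp[OF i] sq_exp[OF i] by simp
qed

end


context constr begin

lemma inner_n1: "(\<Sum>l\<in>Supp d. wt q d l * n1 d l) = 2 * real d / q"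
proof -
  have "(\<Sum>l\<in>Supp d. wt q d l * n1 d l) = (\<Sum>l\<in>Supp d. \<Sum>j<d. wt q d l * \<bar>phi d l j\<bar>)"
    unfolding n1_def by (simp add: sum_distrib_left)
  also have "\<dots> = (\<Sum>j<d. \<Sum>l\<in>Supp d. wt q d l * \<bar>phi d l j\<bar>)"
    by (rule sum.swap)
  also have "\<dots> = (\<Sum>j<d. 2 / q)"
  proof (intro sum.cong refl)
    fix j assume "j \<in> {..<d}"
    then show "(\<Sum>l\<in>Supp d. wt q d l * \<bar>phi d l j\<bar>) = 2 / q"
      using sum_phi[of j "\<lambda>t. \<bar>t\<bar>"] abs_val by (simp add: ja_def)
  qed
  finally show ?thesis by simp
qed

lemma l1_xpt: "l1 d (xpt d F G k l) (M k) = n1 d l"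
  unfolding l1_def n1_def xpt_def by simp

lemma xpt_LZ: "xpt d F G k LZ = M k"
  unfolding xpt_def by simp

lemma sum_Supp_LZ:
  "(\<Sum>l\<in>Supp d. wt q d l * (a l + b + (if l = LZ then c else 0))) =
     (\<Sum>l\<in>Supp d. wt q d l * a l) + b + wt q d LZ * c"
proof -
  have LZ: "LZ \<in> Supp d" by (simp add: Supp_def)
  have "(\<Sum>l\<in>Supp d. wt q d l * (a l + b + (if l = LZ then c else 0))) =
     (\<Sum>l\<in>Supp d. wt q d l * a l) + (\<Sum>l\<in>Supp d. wt q d l) * b + (\<Sum>l\<in>Supp d. if l = LZ then wt q d l * c else 0)"
  proof -
    have "(\<Sum>l\<in>Supp d. wt q d l * (a l + b + (if l = LZ then c else 0))) =
      (\<Sum>l\<in>Supp d. wt q d l * a l + wt q d l * b + (if l = LZ then wt q d l * c else 0))"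
      by (intro sum.cong refl) (simp add: algebra_simps)
    also have "\<dots> = (\<Sum>l\<in>Supp d. wt q d l * a l) + (\<Sum>l\<in>Supp d. wt q d l * b) + (\<Sum>l\<in>Supp d. if l = LZ then wt q d l * c else 0)"
      by (simp only: sum.distrib)
    finally show ?thesis by (simp add: sum_distrib_right)
  qed
  also have "(\<Sum>l\<in>Supp d. if l = LZ then wt q d l * c else 0) = wt q d LZ * c"
    using LZ by (simp add: sum.delta')
  finally show ?thesis by (simp add: wt_sum)
qed

lemma r0_bound: "real K \<le> real (K + 1) * wt q d LZ"
proof -
  have "wt q d LZ = 1 - (ju q + real d * jv q)" by simp
  then have "real (K + 1) * wt q d LZ = real (K + 1) - real (K + 1) * (ju q + real d * jv q)"
    by (simp add: algebra_simps)
  then show ?thesis using dom by simp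
qed

lemma abs_ja: "\<bar>t + ja\<bar> \<ge> ja" "\<bar>t - ja\<bar> \<ge> ja" if "t = 0 \<or> t = 1 \<or> t = -1" for t :: real
  using that by (auto simp: ja_def)

end


locale vtree = constr +
  fixes T :: dtree and med :: "bool list \<Rightarrow> point"
  assumes valid: "\<forall>p\<in>leaves T. \<exists>!k. k < K \<and> leaf_of T (M k) = p"
begin

definition lam :: "point \<Rightarrow> nat" where
  "lam x = (THE k. k < K \<and> leaf_of T (M k) = leaf_of T x)"

lemma lamP: "lam x < K \<and> leaf_of T (M (lam x)) = leaf_of T x"
proof -
  have "\<exists>!k. k < K \<and> leaf_of T (M k) = leaf_of T x" using valid leaf_of_in by blast
  then show ?thesis unfolding lam_def by (rule theI')
qed

lemma lamM: "k < K \<Longrightarrow> lam (M k) = k"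
proof -
  assume k: "k < K"
  have u: "\<exists>!k'. k' < K \<and> leaf_of T (M k') = leaf_of T (M k)" using valid leaf_of_in by blast
  show ?thesis unfolding lam_def by (rule the1_equality[OF u]) (use k in simp)
qed

lemma bij_leaf: "bij_betw (\<lambda>k. leaf_of T (M k)) {..<K} (leaves T)"
proof (rule bij_betw_imageI)
  show "inj_on (\<lambda>k. leaf_of T (M k)) {..<K}"
  proof (rule inj_onI)
    fix k k' assume "k \<in> {..<K}" "k' \<in> {..<K}" "leaf_of T (M k) = leaf_of T (M k')"
    then show "k = k'" using lamM by (metis lamP lessThan_iff lam_def)
  qed
  show "(\<lambda>k. leaf_of T (M k)) ` {..<K} = leaves T"
  proof
    show "(\<lambda>k. leaf_of T (M k)) ` {..<K} \<subseteq> leaves T" using leaf_of_in by auto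
    show "leaves T \<subseteq> (\<lambda>k. leaf_of T (M k)) ` {..<K}"
    proof
      fix p assume "p \<in> leaves T"
      then obtain k where "k < K" "leaf_of T (M k) = p" using valid by blast
      then show "p \<in> (\<lambda>k. leaf_of T (M k)) ` {..<K}" by auto
    qed
  qed
qed

lemma card_leaves: "card (leaves T) = K"
  using bij_betw_same_card[OF bij_leaf] by simp

lemma len_sum: "real K * ln (real K) \<le> (\<Sum>k<K. real (length (leaf_of T (M k))))"
proof -
  have "(\<Sum>k<K. real (length (leaf_of T (M k)))) = (\<Sum>p\<in>leaves T. real (length p))"
    by (rule sum.reindex_bij_betw[OF bij_leaf, of "\<lambda>p. real (length p)"])
  then show ?thesis using depth_sum[of T] card_leaves by simp
qed

definition tt :: "point \<Rightarrow> real" where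
  "tt x = l1 d (M (lam x)) (med (leaf_of T x))"

definition Tt :: real where "Tt = (\<Sum>k<K. tt (M k))"

lemma tt_nonneg: "tt x \<ge> 0" unfolding tt_def by (rule l1_nonneg)

lemma Tt_nonneg: "Tt \<ge> 0" unfolding Tt_def by (simp add: sum_nonneg tt_nonneg)

lemma tt_le: "tt x \<le> Tt"
proof -
  have "tt x = tt (M (lam x))"
    unfolding tt_def using lamP[of x] lamM[of "lam x"] by simp
  also have "\<dots> \<le> Tt" unfolding Tt_def
    by (rule member_le_sum) (use lamP[of x] tt_nonneg in auto)
  finally show ?thesis .
qed

definition h :: "nat \<Rightarrow> lab \<Rightarrow> real" where
  "h k l = l1 d (xpt d F G k l) (M (lam (xpt d F G k l)))"

lemma pw1: assumes k: "k < K"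
  shows "l1 d (xpt d F G k l) (med (leaf_of T (xpt d F G k l))) \<ge>
    h k l + - Tt + (if l = LZ then Tt + tt (M k) else 0)"
proof (cases "l = LZ")
  case True
  have "h k l = 0" unfolding h_def True xpt_LZ lamM[OF k] by (simp add: l1_def)
  moreover have "l1 d (xpt d F G k l) (med (leaf_of T (xpt d F G k l))) = tt (M k)"
    unfolding True xpt_LZ tt_def lamM[OF k] ..
  ultimately show ?thesis using True by simp
next
  case False
  let ?x = "xpt d F G k l"
  have "h k l \<le> l1 d ?x (med (leaf_of T ?x)) + l1 d (med (leaf_of T ?x)) (M (lam ?x))"
    unfolding h_def by (rule l1_tri)
  moreover have "l1 d (med (leaf_of T ?x)) (M (lam ?x)) = tt ?x" unfolding tt_def by (rule l1_sym)
  ultimately show ?thesis using tt_le[of ?x] False by simp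
qed

lemma TC_ge: "real K * mix_exp K \<nu> (\<lambda>x _. l1 d x (med (leaf_of T x))) \<ge> (\<Sum>k<K. \<Sum>l\<in>Supp d. wt q d l * h k l)"
proof -
  have eq: "real K * mix_exp K \<nu> (\<lambda>x _. l1 d x (med (leaf_of T x))) =
    (\<Sum>k<K. \<Sum>l\<in>Supp d. wt q d l * l1 d (xpt d F G k l) (med (leaf_of T (xpt d F G k l))))"
    unfolding mexp using K2 by simp
  have "(\<Sum>k<K. \<Sum>l\<in>Supp d. wt q d l * (h k l + - Tt + (if l = LZ then Tt + tt (M k) else 0)))
      \<le> (\<Sum>k<K. \<Sum>l\<in>Supp d. wt q d l * l1 d (xpt d F G k l) (med (leaf_of T (xpt d F G k l))))"
    by (intro sum_mono mult_left_mono pw1 wt_nonneg[OF gd]) auto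
  moreover have "(\<Sum>k<K. \<Sum>l\<in>Supp d. wt q d l * (h k l + - Tt + (if l = LZ then Tt + tt (M k) else 0)))
      = (\<Sum>k<K. (\<Sum>l\<in>Supp d. wt q d l * h k l) + - Tt + wt q d LZ * (Tt + tt (M k)))"
    by (simp only: sum_Supp_LZ)
  moreover have "(\<Sum>k<K. (\<Sum>l\<in>Supp d. wt q d l * h k l) + - Tt + wt q d LZ * (Tt + tt (M k)))
      = (\<Sum>k<K. \<Sum>l\<in>Supp d. wt q d l * h k l) + Tt * (real (K + 1) * wt q d LZ - real K)"
  proof -
    define W where "W = wt q d LZ"
    define H where "H k = (\<Sum>l\<in>Supp d. wt q d l * h k l)" for k
    have "(\<Sum>k<K. H k + - Tt + W * (Tt + tt (M k))) = (\<Sum>k<K. H k + - Tt + W * Tt + W * tt (M k))"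
      by (intro sum.cong refl) (simp add: ring_distribs)
    also have "\<dots> = (\<Sum>k<K. H k) + (\<Sum>k<K. - Tt) + (\<Sum>k<K. W * Tt) + W * (\<Sum>k<K. tt (M k))"
      by (simp only: sum.distrib sum_distrib_left)
    also have "\<dots> = (\<Sum>k<K. H k) + Tt * (real (K + 1) * W - real K)"
      unfolding Tt_def[symmetric] by (simp add: algebra_simps)
    finally show ?thesis unfolding W_def H_def .
  qed
  moreover have "Tt * (real (K + 1) * wt q d LZ - real K) \<ge> 0"
    using Tt_nonneg r0_bound by simp
  ultimately show ?thesis unfolding eq by linarith
qed

end


context vtree begin

lemma n1_vals: "n1 d LP = real d * ja" "n1 d LM = real d * ja" "j < d \<Longrightarrow> n1 d (EP j) = 1" "j < d \<Longrightarrow> n1 d (EM j) = 1"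
  by (auto simp: n1_def ja_def if_distrib sum.delta cong: if_cong)

lemma h_jit: assumes k: "k < K" and k': "k' < K" and l: "l = LP \<or> l = LM"
  shows "l1 d (xpt d F G k l) (M k') \<ge> n1 d l"
proof -
  have "n1 d l = (\<Sum>j<d. ja)" using l n1_vals by auto
  also have "\<dots> \<le> (\<Sum>j<d. \<bar>xpt d F G k l j - M k' j\<bar>)"
  proof (rule sum_mono)
    fix j assume j: "j \<in> {..<d}"
    have t: "M k j - M k' j = 0 \<or> M k j - M k' j = 1 \<or> M k j - M k' j = -1"
      using mu_bin[of d F G k j] mu_bin[of d F G k' j] by auto
    show "ja \<le> \<bar>xpt d F G k l j - M k' j\<bar>"
      using l j abs_ja(1)[OF t] abs_ja(2)[OF t] by (auto simp: xpt_def algebra_simps)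
  qed
  finally show ?thesis unfolding l1_def .
qed

lemma hk_bound: assumes k: "k < K"
  shows "(\<Sum>l\<in>Supp d. wt q d l * h k l) \<ge> 2 * real d / q + jv q / 2 * (real d / 2 - 2) * real (length (leaf_of T (M k)))"
proof -
  define S where "S = M ` {..<K}"
  define E where "E = real d / 2 - 2"
  have E0: "E \<ge> 0" using d8 by (simp add: E_def)
  have bin: "\<forall>y\<in>S. \<forall>i. y i = 0 \<or> y i = 1" unfolding S_def using mu_bin by auto
  have uniqS: "\<forall>p\<in>leaves T. \<exists>!y. y \<in> S \<and> leaf_of T y = p"
  proof
    fix p assume p: "p \<in> leaves T"
    then obtain k0 where k0: "k0 < K" "leaf_of T (M k0) = p" using valid by blast
    have un: "k' = k0" if "k' < K" "leaf_of T (M k') = p" for k' using valid p k0 that by blast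
    show "\<exists>!y. y \<in> S \<and> leaf_of T y = p"
    proof (rule ex1I[of _ "M k0"])
      show "M k0 \<in> S \<and> leaf_of T (M k0) = p" using k0 by (auto simp: S_def)
      fix y assume "y \<in> S \<and> leaf_of T y = p"
      then obtain k' where "k' < K" "y = M k'" "leaf_of T (M k') = p" by (auto simp: S_def)
      then show "y = M k0" using un by blast
    qed
  qed
  obtain A where A: "finite A" "card A = length (leaf_of T (M k))"
    "\<forall>i\<in>A. leaf_of T ((M k)(i := 1 - M k i)) \<noteq> leaf_of T (M k) \<and> (\<exists>y\<in>S. y i \<noteq> M k i)"
    using flip_count[OF bin uniqS, of "M k"] k by (auto simp: S_def)
  have Ad: "i < d" if "i \<in> A" for i
  proof (rule ccontr)
    assume "\<not> i < d"
    then have "\<forall>y\<in>S. y i = M k i" by (auto simp: S_def mu_out)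
    then show False using A(3) that by blast
  qed
  define fl where "fl i = (if M k i = 0 then EP i else EM i)" for i
  have flx: "xpt d F G k (fl i) = (M k)(i := 1 - M k i)" if "i < d" for i
  proof
    fix j
    show "xpt d F G k (fl i) j = ((M k)(i := 1 - M k i)) j"
      using that mu_bin[of d F G k i] by (auto simp: fl_def xpt_def)
  qed
  have injfl: "inj_on fl A" by (auto simp: inj_on_def fl_def split: if_splits)
  define FL where "FL = fl ` A"
  have FLS: "FL \<subseteq> Supp d" using Ad by (auto simp: FL_def fl_def Supp_def)
  have pw: "h k l \<ge> n1 d l + (if l \<in> FL then E else 0)" if l: "l \<in> Supp d" for l
  proof (cases "lam (xpt d F G k l) = k")
    case True
    have "l \<notin> FL"
    proof
      assume "l \<in> FL"
      then obtain i where i: "i \<in> A" "l = fl i" by (auto simp: FL_def)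
      have "leaf_of T (M k) = leaf_of T (xpt d F G k l)" using lamP[of "xpt d F G k l"] True by simp
      also have "\<dots> = leaf_of T ((M k)(i := 1 - M k i))" using i flx Ad by simp
      finally show False using A(3) i by metis
    qed
    then show ?thesis unfolding h_def True l1_xpt by simp
  next
    case False
    define k' where "k' = lam (xpt d F G k l)"
    have k': "k' < K" "k' \<noteq> k" using lamP False by (auto simp: k'_def)
    have hdef: "h k l = l1 d (xpt d F G k l) (M k')" unfolding h_def k'_def ..
    show ?thesis
    proof (cases l)
      case LZ
      then show ?thesis using False lamM[OF k] by (simp add: xpt_LZ)
    next
      case LP
      then have "l \<notin> FL" by (auto simp: FL_def fl_def)
      then show ?thesis using h_jit[OF k k'(1)] LP hdef by simp
    next
      case LM
      then have "l \<notin> FL" by (auto simp: FL_def fl_def)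
      then show ?thesis using h_jit[OF k k'(1)] LM hdef by simp
    next
      case (EP j)
      then have j: "j < d" using l by (auto simp: Supp_def)
      have "l1 d (M k) (M k') \<le> l1 d (M k) (xpt d F G k l) + l1 d (xpt d F G k l) (M k')" by (rule l1_tri)
      then have "real d / 2 \<le> 1 + h k l" using l1_means[OF k k'(1) k'(2)[symmetric]] l1_sym[of d "M k"] l1_xpt[of k l] n1_vals(3)[OF j] EP hdef by simp
      then show ?thesis using E0 EP n1_vals(3)[OF j] by (simp add: E_def)
    next
      case (EM j)
      then have j: "j < d" using l by (auto simp: Supp_def)
      have "l1 d (M k) (M k') \<le> l1 d (M k) (xpt d F G k l) + l1 d (xpt d F G k l) (M k')" by (rule l1_tri)
      then have "real d / 2 \<le> 1 + h k l" using l1_means[OF k k'(1) k'(2)[symmetric]] l1_sym[of d "M k"] l1_xpt[of k l] n1_vals(4)[OF j] EM hdef by simp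
      then show ?thesis using E0 EM n1_vals(4)[OF j] by (simp add: E_def)
    qed
  qed
  have "(\<Sum>l\<in>Supp d. wt q d l * (n1 d l + (if l \<in> FL then E else 0))) \<le> (\<Sum>l\<in>Supp d. wt q d l * h k l)"
    by (intro sum_mono mult_left_mono pw wt_nonneg[OF gd])
  moreover have "(\<Sum>l\<in>Supp d. wt q d l * (n1 d l + (if l \<in> FL then E else 0)))
      = (\<Sum>l\<in>Supp d. wt q d l * n1 d l) + (\<Sum>l\<in>Supp d. if l \<in> FL then wt q d l * E else 0)"
  proof -
    have "(\<Sum>l\<in>Supp d. wt q d l * (n1 d l + (if l \<in> FL then E else 0)))
      = (\<Sum>l\<in>Supp d. wt q d l * n1 d l + (if l \<in> FL then wt q d l * E else 0))"
      by (intro sum.cong refl) (auto simp: ring_distribs)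
    then show ?thesis by (simp only: sum.distrib)
  qed
  moreover have "(\<Sum>l\<in>Supp d. if l \<in> FL then wt q d l * E else 0) = (\<Sum>l\<in>FL. wt q d l * E)"
    using FLS by (simp add: sum.If_cases Int_absorb1)
  moreover have "(\<Sum>l\<in>FL. wt q d l * E) = (\<Sum>i\<in>A. wt q d (fl i) * E)"
    unfolding FL_def by (rule sum.reindex[OF injfl, unfolded comp_def])
  moreover have "(\<Sum>i\<in>A. wt q d (fl i) * E) = (\<Sum>i\<in>A. jv q / 2 * E)"
    using Ad by (intro sum.cong refl) (auto simp: fl_def)
  moreover have "(\<Sum>i\<in>A. jv q / 2 * E) = jv q / 2 * E * real (card A)" by simp
  ultimately have "(\<Sum>l\<in>Supp d. wt q d l * h k l) \<ge> 2 * real d / q + jv q / 2 * E * real (card A)"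
    using inner_n1 by linarith
  then show ?thesis using A(2) by (simp add: E_def)
qed

lemma price_ge: "price d K \<nu> T med \<ge> ln (real K) / 160"
proof -
  define c where "c = jv q / 2 * (real d / 2 - 2)"
  define TC where "TC = mix_exp K \<nu> (\<lambda>x _. l1 d x (med (leaf_of T x)))"
  have Kp: "real K > 0" using K2 by simp
  have c0: "c \<ge> 0" using d8 q by (simp add: c_def jv_def)
  have "(\<Sum>k<K. 2 * real d / q + c * real (length (leaf_of T (M k)))) \<le> (\<Sum>k<K. \<Sum>l\<in>Supp d. wt q d l * h k l)"
    by (rule sum_mono) (use hk_bound in \<open>simp add: c_def mult.assoc\<close>)
  then have s1: "real K * TC \<ge> (\<Sum>k<K. 2 * real d / q + c * real (length (leaf_of T (M k))))"
    using TC_ge unfolding TC_def by linarith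
  have s2: "(\<Sum>k<K. 2 * real d / q + c * real (length (leaf_of T (M k))))
     = real K * (2 * real d / q) + c * (\<Sum>k<K. real (length (leaf_of T (M k))))"
    by (simp add: sum.distrib sum_distrib_left)
  have s3: "c * (real K * ln (real K)) \<le> c * (\<Sum>k<K. real (length (leaf_of T (M k))))"
    by (rule mult_left_mono[OF len_sum c0])
  have "real K * (2 * real d / q + c * ln (real K)) = real K * (2 * real d / q) + c * (real K * ln (real K))"
    by (simp add: algebra_simps)
  then have "real K * (2 * real d / q + c * ln (real K)) \<le> real K * TC" using s1 s2 s3 by linarith
  then have TCb: "2 * real d / q + c * ln (real K) \<le> TC" using Kp by simp
  have Dp: "2 * real d / q > 0" using q d8 by simp
  have price: "price d K \<nu> T med = TC / (2 * real d / q)"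
    unfolding price_def TC_def D_val ..
  have lnK: "ln (real K) \<ge> 0" using K2 by simp
  have cc: "1 / 160 \<le> c / (2 * real d / q)"
    using d8 q by (simp add: c_def jv_def field_simps)
  have "(2 * real d / q + c * ln (real K)) / (2 * real d / q) \<le> TC / (2 * real d / q)"
    by (rule divide_right_mono[OF TCb]) (use Dp in simp)
  moreover have "(2 * real d / q + c * ln (real K)) / (2 * real d / q) = 1 + c / (2 * real d / q) * ln (real K)"
  proof -
    have "real d > 0" using d8 by simp
    then show ?thesis using q by (simp add: field_simps)
  qed
  moreover have "1 / 160 * ln (real K) \<le> c / (2 * real d / q) * ln (real K)"
    by (rule mult_right_mono[OF cc lnK])
  ultimately show ?thesis unfolding price using lnK by linarith
qed

end


lemma exists_m: assumes K: "K \<ge> (2::nat)" shows "\<exists>m\<ge>3. K \<le> 2 ^ m \<and> 2 ^ m \<le> 4 * K"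
proof -
  have ex: "\<exists>m. K \<le> 2 ^ m" using less_exp[of K] by (metis less_imp_le)
  define m0 where "m0 = (LEAST m. K \<le> 2 ^ m)"
  have m0: "K \<le> 2 ^ m0" unfolding m0_def by (rule LeastI_ex[OF ex])
  show ?thesis
  proof (cases "m0 \<le> 3")
    case True
    have "(2::nat) ^ m0 \<le> 2 ^ 3" using True by (intro power_increasing) auto
    then show ?thesis using m0 K by (intro exI[of _ 3]) auto
  next
    case False
    then obtain n where n: "m0 = Suc n" by (cases m0) auto
    have "\<not> K \<le> 2 ^ n" unfolding m0_def by (rule not_less_Least) (use n m0_def in simp)
    then show ?thesis using False m0 n by (intro exI[of _ m0]) auto
  qed
qed

lemma poly_ineq: assumes "x \<ge> (2::real)" shows "(x + 1) * (361/90 + 4 * x / 10) \<le> 2 * x ^ 3"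
proof -
  have h2: "x^2 \<ge> 2 * x" using assms by (simp add: power2_eq_square)
  have h3: "x^3 \<ge> 2 * x^2" using assms by (simp add: power3_eq_cube power2_eq_square)
  have eq: "(x + 1) * (361/90 + 4 * x / 10) = (36 * x^2 + 397 * x + 361) / 90"
    by (simp add: field_simps power2_eq_square)
  have "36 * x^2 + 397 * x + 361 \<le> 180 * x ^ 3" using h2 h3 assms by linarith
  then show ?thesis unfolding eq by simp
qed

theorem theorem4:
  shows "\<exists>C::real. C > 0 \<and>
    (\<forall>(K::nat) (q::real). K \<ge> 2 \<and> q \<ge> 2 * real K ^ 3 \<longrightarrow>
      (\<exists>(d::nat) (\<nu>::nat \<Rightarrow> point pmf) (\<sigma>::nat \<Rightarrow> real).
         mixture_model d K \<nu> \<sigma> \<and>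
         ENR d K \<nu> \<sigma> = q \<and>
         (let \<alpha> = (1::real); \<beta> = sqrt q / 2 in
           (\<forall>i<d. \<beta> * mix_exp K \<nu> (\<lambda>x m. \<bar>x i - m i\<bar>)
                    \<ge> sqrt (mix_exp K \<nu> (\<lambda>x m. \<bar>x i - m i\<bar>\<^sup>2))) \<and>
           (\<forall>(T::dtree) (med::bool list \<Rightarrow> point).
              num_leaves T = K \<and>
              (\<forall>p\<in>leaves T. \<exists>!k. k < K \<and> leaf_of T (comp_mean \<nu> k) = p) \<and>
              leaf_medians d K \<nu> T med
              \<longrightarrow> price d K \<nu> T med \<ge> C * (\<alpha> * \<beta> * ln (real K) / sqrt q)))))"
proof (intro exI[of _ "1/80"] conjI allI impI)
  show "(0::real) < 1 / 80" by simp
  fix K :: nat and q :: real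
  assume Kq: "2 \<le> K \<and> 2 * real K ^ 3 \<le> q"
  then have K2: "K \<ge> 2" and qK: "2 * real K ^ 3 \<le> q" by auto
  have "real K ^ 3 > 0" using K2 by simp
  then have qp: "q > 0" using qK by linarith
  obtain m where m: "m \<ge> 3" "K \<le> 2 ^ m" "2 ^ m \<le> 4 * K" using exists_m[OF K2] by blast
  define d where "d = (2::nat) ^ m"
  have "card {..<d} = card (Pow {..<m})" by (simp add: d_def card_Pow)
  then obtain F where F: "bij_betw F {..<d} (Pow {..<m})"
    using finite_same_card_bij[of "{..<d}" "Pow {..<m}"] by auto
  have "card {..<K} \<le> card (Pow {..<m})" using m by (simp add: card_Pow)
  then obtain G where G: "G ` {..<K} \<subseteq> Pow {..<m}" "inj_on G {..<K}"
    using card_le_inj[of "{..<K}" "Pow {..<m}"] by auto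
  have "d \<le> 4 * K" using m d_def by simp
  then have "real d \<le> real (4 * K)" by (simp only: of_nat_le_iff)
  then have dK: "real d \<le> 4 * real K" by simp
  have dom: "real (K + 1) * (ju q + real d * jv q) \<le> 1"
  proof -
    have "real (K + 1) * (ju q + real d * jv q) = (real K + 1) * (361/90 + real d / 10) / q"
      using qp by (simp add: ju_def jv_def field_simps)
    also have "\<dots> \<le> (real K + 1) * (361/90 + 4 * real K / 10) / q"
      using dK qp by (intro divide_right_mono mult_left_mono) auto
    also have "\<dots> \<le> 2 * real K ^ 3 / q"
      using poly_ineq[of "real K"] K2 qp by (intro divide_right_mono) auto
    also have "\<dots> \<le> 1" using qK qp by simp
    finally show ?thesis .
  qed
  interpret constr q d m K F G
    by unfold_locales (use qp m K2 F G dom d_def in auto)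
  show "\<exists>(d::nat) (\<nu>::nat \<Rightarrow> point pmf) (\<sigma>::nat \<Rightarrow> real).
         mixture_model d K \<nu> \<sigma> \<and>
         ENR d K \<nu> \<sigma> = q \<and>
         (let \<alpha> = (1::real); \<beta> = sqrt q / 2 in
           (\<forall>i<d. \<beta> * mix_exp K \<nu> (\<lambda>x m. \<bar>x i - m i\<bar>)
                    \<ge> sqrt (mix_exp K \<nu> (\<lambda>x m. \<bar>x i - m i\<bar>\<^sup>2))) \<and>
           (\<forall>(T::dtree) (med::bool list \<Rightarrow> point).
              num_leaves T = K \<and>
              (\<forall>p\<in>leaves T. \<exists>!k. k < K \<and> leaf_of T (comp_mean \<nu> k) = p) \<and>
              leaf_medians d K \<nu> T med
              \<longrightarrow> price d K \<nu> T med \<ge> 1/80 * (\<alpha> * \<beta> * ln (real K) / sqrt q)))"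
  proof (intro exI[of _ d] exI[of _ "nu q d F G"] exI[of _ "\<lambda>_. sqrt (1 / q)"] conjI)
    show "mixture_model d K (nu q d F G) (\<lambda>_. sqrt (1 / q))" by (rule model)
    show "ENR d K (nu q d F G) (\<lambda>_. sqrt (1 / q)) = q" by (rule ENR_val)
    have sq: "sqrt q > 0" using qp by simp
    have B: "\<forall>i<d. sqrt q / 2 * mix_exp K (nu q d F G) (\<lambda>x m. \<bar>x i - m i\<bar>)
                    \<ge> sqrt (mix_exp K (nu q d F G) (\<lambda>x m. \<bar>x i - m i\<bar>\<^sup>2))"
      using beta_cond by blast
    have P: "\<forall>(T::dtree) (med::bool list \<Rightarrow> point).
              num_leaves T = K \<and>
              (\<forall>p\<in>leaves T. \<exists>!k. k < K \<and> leaf_of T (comp_mean (nu q d F G) k) = p) \<and>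
              leaf_medians d K (nu q d F G) T med
              \<longrightarrow> price d K (nu q d F G) T med \<ge> 1/80 * (1 * (sqrt q / 2) * ln (real K) / sqrt q)"
    proof (intro allI impI)
      fix T med
      assume H: "num_leaves T = K \<and>
              (\<forall>p\<in>leaves T. \<exists>!k. k < K \<and> leaf_of T (comp_mean (nu q d F G) k) = p) \<and>
              leaf_medians d K (nu q d F G) T med"
      interpret vtree q d m K F G T med
        by unfold_locales (use H in \<open>simp add: cm\<close>)
      have e: "1/80 * (1 * (sqrt q / 2) * ln (real K) / sqrt q) = ln (real K) / 160"
        using sq by (simp add: field_simps)
      show "price d K (nu q d F G) T med \<ge> 1/80 * (1 * (sqrt q / 2) * ln (real K) / sqrt q)"
        unfolding e by (rule price_ge)
    qed
    show "let \<alpha> = (1::real); \<beta> = sqrt q / 2 in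
           (\<forall>i<d. \<beta> * mix_exp K (nu q d F G) (\<lambda>x m. \<bar>x i - m i\<bar>)
                    \<ge> sqrt (mix_exp K (nu q d F G) (\<lambda>x m. \<bar>x i - m i\<bar>\<^sup>2))) \<and>
           (\<forall>(T::dtree) (med::bool list \<Rightarrow> point).
              num_leaves T = K \<and>
              (\<forall>p\<in>leaves T. \<exists>!k. k < K \<and> leaf_of T (comp_mean (nu q d F G) k) = p) \<and>
              leaf_medians d K (nu q d F G) T med
              \<longrightarrow> price d K (nu q d F G) T med \<ge> 1/80 * (\<alpha> * \<beta> * ln (real K) / sqrt q))"
      unfolding Let_def by (intro conjI B P)
  qed
qed


end
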